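(* Let $\delta\in(0,1)$ and let $\mathbf a$ be given by $a_0=0$ and $a_i=\delta^i$ for $i\ge 1$. Then $f^{\mathbf a}$ satisfies the density axiom and does not satisfy the size axiom.
   Context: Graphs are finite directed graphs; $d_G(x,y)$ is the shortest directed path length from $x$ to $y$ ($\infty$ if none). For $\mathbf a\in\mathbb{R}^{\mathbb{N}}$ the linear centrality is $f^{\mathbf a}_G(i)=\sum_{k\ge 0}|\{j: d_G(j,i)=k\}|\,a_k$ (only finite distances counted). For positive integers $k,p$: a $k$-clique has $k$ nodes with arcs in both directions between every pair of distinct nodes; a directed $p$-cycle has nodes $z_0,\dots,z_{p-1}$ with arcs $z_j\to z_{j+1\bmod p}$. Let $x$ be a clique node and $y$ a cycle node. $S$ is the disjoint union of the $k$-clique and the $p$-cycle; $S_{xy}$ is $S$ plus the arcs $x\to y$ and $y\to x$. Density axiom: for every $k\ge3$ and $p=k$, $f_{S_{xy}}(x)>f_{S_{xy}}(y)$. Size axiom: for every fixed $p$ there is $k_0$ with $f_S(x)>f_S(y)$ for all $k\ge k_0$, and for every fixed $k$ there is $p_0$ with $f_S(x)<f_S(y)$ for all $p\ge p_0$. *)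

theory Defs
  imports Complex_Main "HOL-Library.Extended_Nat"
begin

definition dist :: "('v \<times> 'v) set \<Rightarrow> 'v \<Rightarrow> 'v \<Rightarrow> enat" where
  "dist E u v = (if \<exists>n. (u, v) \<in> E ^^ n then enat (LEAST n. (u, v) \<in> E ^^ n) else \<infinity>)"

definition lin_cent :: "(nat \<Rightarrow> real) \<Rightarrow> 'v set \<Rightarrow> ('v \<times> 'v) set \<Rightarrow> 'v \<Rightarrow> real" where
  "lin_cent a V E i =
     (\<Sum>k \<in> {k. \<exists>j\<in>V. dist E j i = enat k}. real (card {j\<in>V. dist E j i = enat k}) * a k)"

definition clique_nodes :: "nat \<Rightarrow> (nat + nat) set" where
  "clique_nodes k = Inl ` {..<k}"

definition cycle_nodes :: "nat \<Rightarrow> (nat + nat) set" where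
  "cycle_nodes p = Inr ` {..<p}"

definition S_nodes :: "nat \<Rightarrow> nat \<Rightarrow> (nat + nat) set" where
  "S_nodes k p = clique_nodes k \<union> cycle_nodes p"

definition S_arcs :: "nat \<Rightarrow> nat \<Rightarrow> ((nat + nat) \<times> (nat + nat)) set" where
  "S_arcs k p = {(Inl i, Inl j) | i j. i < k \<and> j < k \<and> i \<noteq> j}
              \<union> {(Inr j, Inr ((j + 1) mod p)) | j. j < p}"

definition Sxy_arcs :: "nat \<Rightarrow> nat \<Rightarrow> (nat + nat) \<Rightarrow> (nat + nat) \<Rightarrow> ((nat + nat) \<times> (nat + nat)) set" where
  "Sxy_arcs k p x y = S_arcs k p \<union> {(x, y), (y, x)}"

definition density_axiom :: "(nat \<Rightarrow> real) \<Rightarrow> bool" where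
  "density_axiom a \<longleftrightarrow>
     (\<forall>k \<ge> 3. \<forall>x \<in> clique_nodes k. \<forall>y \<in> cycle_nodes k.
        lin_cent a (S_nodes k k) (Sxy_arcs k k x y) x > lin_cent a (S_nodes k k) (Sxy_arcs k k x y) y)"

definition size_axiom :: "(nat \<Rightarrow> real) \<Rightarrow> bool" where
  "size_axiom a \<longleftrightarrow>
     (\<forall>p \<ge> 1. \<exists>k0. \<forall>k \<ge> k0. k \<ge> 1 \<longrightarrow> (\<forall>x \<in> clique_nodes k. \<forall>y \<in> cycle_nodes p.
        lin_cent a (S_nodes k p) (S_arcs k p) x > lin_cent a (S_nodes k p) (S_arcs k p) y)) \<and>
     (\<forall>k \<ge> 1. \<exists>p0. \<forall>p \<ge> p0. p \<ge> 1 \<longrightarrow> (\<forall>x \<in> clique_nodes k. \<forall>y \<in> cycle_nodes p.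
        lin_cent a (S_nodes k p) (S_arcs k p) x < lin_cent a (S_nodes k p) (S_arcs k p) y))"

end

theory Submission
  imports Defs
begin


lemma reach_lower:
  assumes "D i = 0" and "i \<in> R"
    and closed: "\<And>u w. (u,w) \<in> E \<Longrightarrow> w \<in> R \<Longrightarrow> u \<in> R \<and> D u \<le> Suc (D w)"
  shows "(u,i) \<in> E^^m \<Longrightarrow> u \<in> R \<and> D u \<le> m"
proof (induction m arbitrary: u)
  case 0 thus ?case using assms by simp
next
  case (Suc m)
  from relpow_Suc_D2[OF Suc.prems] obtain w where "(u,w) \<in> E" "(w,i) \<in> E^^m" by blast
  with Suc.IH closed show ?case by force
qed

lemma reach_upper:
  assumes z: "\<And>u. u \<in> R \<Longrightarrow> D u = 0 \<Longrightarrow> u = i"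
    and st: "\<And>u. u \<in> R \<Longrightarrow> 0 < D u \<Longrightarrow> \<exists>w\<in>R. (u,w) \<in> E \<and> Suc (D w) = D u"
  shows "u \<in> R \<Longrightarrow> (u,i) \<in> E^^(D u)"
proof (induction "D u" arbitrary: u)
  case 0 then show ?case using z by force
next
  case (Suc n)
  then obtain w where w: "w \<in> R" "(u,w) \<in> E" "Suc (D w) = D u" using st by (metis zero_less_Suc)
  then have "(w,i) \<in> E^^(D w)" using Suc by auto
  then show ?case using relpow_Suc_I2 w by metis
qed

lemma dist_D:
  assumes "D i = 0" and "i \<in> R"
    and closed: "\<And>u w. (u,w) \<in> E \<Longrightarrow> w \<in> R \<Longrightarrow> u \<in> R \<and> D u \<le> Suc (D w)"
    and z: "\<And>u. u \<in> R \<Longrightarrow> D u = 0 \<Longrightarrow> u = i"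
    and st: "\<And>u. u \<in> R \<Longrightarrow> 0 < D u \<Longrightarrow> \<exists>w\<in>R. (u,w) \<in> E \<and> Suc (D w) = D u"
  shows "dist E u i = (if u \<in> R then enat (D u) else \<infinity>)"
proof (cases "u \<in> R")
  case True
  have up: "(u,i) \<in> E^^(D u)" using reach_upper[OF z st True] by blast
  have lo: "\<And>m. (u,i) \<in> E^^m \<Longrightarrow> D u \<le> m" using reach_lower[OF assms(1,2) closed] by blast
  have "(LEAST n. (u, i) \<in> E ^^ n) = D u"
    by (rule Least_equality) (use up lo in auto)
  then show ?thesis using True up unfolding dist_def by auto
next
  case False
  then have "\<And>m. (u,i) \<notin> E^^m" using reach_lower[OF assms(1,2) closed] by blast
  then show ?thesis using False unfolding dist_def by auto
qed

lemma lin_cent_D: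
  assumes "finite V" "D i = 0" and "i \<in> R"
    and closed: "\<And>u w. (u,w) \<in> E \<Longrightarrow> w \<in> R \<Longrightarrow> u \<in> R \<and> D u \<le> Suc (D w)"
    and z: "\<And>u. u \<in> R \<Longrightarrow> D u = 0 \<Longrightarrow> u = i"
    and st: "\<And>u. u \<in> R \<Longrightarrow> 0 < D u \<Longrightarrow> \<exists>w\<in>R. (u,w) \<in> E \<and> Suc (D w) = D u"
  shows "lin_cent a V E i = (\<Sum>j\<in>V \<inter> R. a (D j))"
proof -
  have d: "dist E u i = (if u \<in> R then enat (D u) else \<infinity>)" for u
    using assms(2-6) by (rule dist_D)
  have s1: "{k. \<exists>j\<in>V. dist E j i = enat k} = D ` (V \<inter> R)"
  proof
    show "{k. \<exists>j\<in>V. dist E j i = enat k} \<subseteq> D ` (V \<inter> R)"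
    proof
      fix k assume "k \<in> {k. \<exists>j\<in>V. dist E j i = enat k}"
      then obtain j where j: "j \<in> V" "dist E j i = enat k" by blast
      have e: "(if j \<in> R then enat (D j) else \<infinity>) = enat k" by (subst d[of j, symmetric]) (rule j(2))
      have "j \<in> R" using e by (cases "j \<in> R") auto
      moreover have "D j = k" using e calculation by simp
      ultimately show "k \<in> D ` (V \<inter> R)" using j by blast
    qed
    show "D ` (V \<inter> R) \<subseteq> {k. \<exists>j\<in>V. dist E j i = enat k}"
    proof
      fix k assume "k \<in> D ` (V \<inter> R)"
      then obtain j where "j \<in> V" "j \<in> R" "k = D j" by blast
      then show "k \<in> {k. \<exists>j\<in>V. dist E j i = enat k}" using d[of j] by auto
    qed
  qed
  have s2: "{j\<in>V. dist E j i = enat k} = {j \<in> V \<inter> R. D j = k}" for k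
  proof -
    have "dist E j i = enat k \<longleftrightarrow> j \<in> R \<and> D j = k" for j
      unfolding d[of j] by (cases "j \<in> R") auto
    then show ?thesis by blast
  qed
  have "(\<Sum>j\<in>V \<inter> R. a (D j)) = (\<Sum>y\<in>D ` (V \<inter> R). \<Sum>j\<in>{x \<in> V \<inter> R. D x = y}. a (D j))"
    using sum.image_gen[of "V \<inter> R" "\<lambda>j. a (D j)" D] assms(1) by simp
  also have "\<dots> = (\<Sum>y\<in>D ` (V \<inter> R). real (card {x \<in> V \<inter> R. D x = y}) * a y)"
  proof (rule sum.cong)
    fix y assume "y \<in> D ` (V \<inter> R)"
    have "(\<Sum>j\<in>{x \<in> V \<inter> R. D x = y}. a (D j)) = (\<Sum>j\<in>{x \<in> V \<inter> R. D x = y}. a y)"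
      by (rule sum.cong) auto
    then show "(\<Sum>j\<in>{x \<in> V \<inter> R. D x = y}. a (D j)) = real (card {x \<in> V \<inter> R. D x = y}) * a y"
      by simp
  qed simp
  finally show ?thesis unfolding lin_cent_def s1 s2 by simp
qed



definition cd :: "nat \<Rightarrow> nat \<Rightarrow> nat \<Rightarrow> nat" where
  "cd p t j = (if j \<le> t then t - j else t + p - j)"

lemma mod_suc: "(j::nat) < p \<Longrightarrow> (j + 1) mod p = (if j + 1 < p then j + 1 else 0)"
proof (cases "j + 1 < p")
  case False
  assume "j < p"
  then have "j + 1 = p" using False by linarith
  then show ?thesis by simp
qed simp

lemma cd_lt: "t < p \<Longrightarrow> j < p \<Longrightarrow> cd p t j < p"
  unfolding cd_def by auto

lemma cd_zero: "t < p \<Longrightarrow> j < p \<Longrightarrow> cd p t j = 0 \<longleftrightarrow> j = t"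
  unfolding cd_def by auto

lemma cd_step: "t < p \<Longrightarrow> j < p \<Longrightarrow> j \<noteq> t \<Longrightarrow> Suc (cd p t ((j+1) mod p)) = cd p t j"
  by (simp only: mod_suc) (auto simp: cd_def)

lemma cd_le: "t < p \<Longrightarrow> j < p \<Longrightarrow> cd p t j \<le> Suc (cd p t ((j+1) mod p))"
  by (simp only: mod_suc) (auto simp: cd_def)

lemma cd_sum: "t < p \<Longrightarrow> (\<Sum>j<p. f (cd p t j)) = (\<Sum>d<p. f d)"
  by (rule sum.reindex_bij_witness[where i="cd p t" and j="cd p t"]) (auto simp: cd_def)



lemma sum_S_nodes: "(\<Sum>v\<in>S_nodes k p. f v) = (\<Sum>j<k. f (Inl j)) + (\<Sum>j<p. f (Inr j))"
proof -
  have "(\<Sum>v\<in>S_nodes k p. f v) = (\<Sum>v\<in>Inl ` {..<k}. f v) + (\<Sum>v\<in>Inr ` {..<p}. f v)"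
    unfolding S_nodes_def clique_nodes_def cycle_nodes_def
    by (rule sum.union_disjoint) auto
  also have "\<dots> = (\<Sum>j<k. f (Inl j)) + (\<Sum>j<p. f (Inr j))"
    by (simp add: sum.reindex)
  finally show ?thesis .
qed

lemma fin_S: "finite (S_nodes k p)"
  unfolding S_nodes_def clique_nodes_def cycle_nodes_def by auto

lemma sum_one_out: "i0 < k \<Longrightarrow> (\<Sum>j<k. (f::nat\<Rightarrow>real) (if j = i0 then u else w)) = f u + real (k - 1) * f w"
proof -
  assume h: "i0 < k"
  have "(\<Sum>j<k. f (if j = i0 then u else w)) = f u + (\<Sum>j\<in>{..<k} - {i0}. f (if j = i0 then u else w))"
    using h by (subst sum.remove[of _ i0]) auto
  also have "(\<Sum>j\<in>{..<k} - {i0}. f (if j = i0 then u else w)) = (\<Sum>j\<in>{..<k} - {i0}. f w)"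
    by (rule sum.cong) auto
  also have "\<dots> = real (k - 1) * f w" using h by simp
  finally show ?thesis .
qed

lemma G1:
  assumes "i0 < k"
  shows "lin_cent a (S_nodes k p) (S_arcs k p) (Inl i0) = a 0 + real (k - 1) * a 1"
proof -
  define D :: "nat + nat \<Rightarrow> nat" where "D = case_sum (\<lambda>j. if j = i0 then 0 else 1) (\<lambda>_. 0)"
  have "lin_cent a (S_nodes k p) (S_arcs k p) (Inl i0) = (\<Sum>j\<in>S_nodes k p \<inter> clique_nodes k. a (D j))"
  proof (rule lin_cent_D[OF fin_S])
    show "D (Inl i0) = 0" by (simp add: D_def)
    show "Inl i0 \<in> clique_nodes k" using assms by (simp add: clique_nodes_def)
    show "\<And>u w. (u,w) \<in> S_arcs k p \<Longrightarrow> w \<in> clique_nodes k \<Longrightarrow> u \<in> clique_nodes k \<and> D u \<le> Suc (D w)"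
      by (auto simp: S_arcs_def clique_nodes_def D_def)
    show "\<And>u. u \<in> clique_nodes k \<Longrightarrow> D u = 0 \<Longrightarrow> u = Inl i0"
      by (auto simp: clique_nodes_def D_def split: if_splits)
    show "\<exists>w\<in>clique_nodes k. (u,w) \<in> S_arcs k p \<and> Suc (D w) = D u"
      if hu: "u \<in> clique_nodes k" "0 < D u" for u
    proof -
      obtain j where j: "u = Inl j" "j < k" using hu by (auto simp: clique_nodes_def)
      then have "j \<noteq> i0" using hu by (auto simp: D_def)
      then show ?thesis using j assms
        by (intro bexI[of _ "Inl i0"]) (auto simp: S_arcs_def clique_nodes_def D_def)
    qed
  qed
  also have "S_nodes k p \<inter> clique_nodes k = Inl ` {..<k}"
    by (auto simp: S_nodes_def clique_nodes_def cycle_nodes_def)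
  also have "(\<Sum>j\<in>Inl ` {..<k}. a (D j)) = (\<Sum>j<k. a (if j = i0 then 0 else 1))"
    by (simp add: sum.reindex D_def)
  also have "\<dots> = a 0 + real (k - 1) * a 1" using sum_one_out[OF assms] .
  finally show ?thesis .
qed

lemma G2:
  assumes "t < p"
  shows "lin_cent a (S_nodes k p) (S_arcs k p) (Inr t) = (\<Sum>d<p. a d)"
proof -
  define D :: "nat + nat \<Rightarrow> nat" where "D = case_sum (\<lambda>_. 0) (cd p t)"
  have "lin_cent a (S_nodes k p) (S_arcs k p) (Inr t) = (\<Sum>j\<in>S_nodes k p \<inter> cycle_nodes p. a (D j))"
  proof (rule lin_cent_D[OF fin_S])
    show "D (Inr t) = 0" by (simp add: D_def cd_def)
    show "Inr t \<in> cycle_nodes p" using assms by (simp add: cycle_nodes_def)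
    show "u \<in> cycle_nodes p \<and> D u \<le> Suc (D w)"
      if "(u,w) \<in> S_arcs k p" "w \<in> cycle_nodes p" for u w
      using that assms cd_le[OF assms] by (auto simp: S_arcs_def cycle_nodes_def D_def)
    show "\<And>u. u \<in> cycle_nodes p \<Longrightarrow> D u = 0 \<Longrightarrow> u = Inr t"
      using cd_zero[OF assms] by (auto simp: cycle_nodes_def D_def)
    show "\<exists>w\<in>cycle_nodes p. (u,w) \<in> S_arcs k p \<and> Suc (D w) = D u"
      if hu: "u \<in> cycle_nodes p" "0 < D u" for u
    proof -
      obtain j where j: "u = Inr j" "j < p" using hu by (auto simp: cycle_nodes_def)
      then have "j \<noteq> t" using hu by (auto simp: D_def cd_def)
      then show ?thesis using j assms cd_step[OF assms j(2)]
        by (intro bexI[of _ "Inr ((j+1) mod p)"]) (auto simp: S_arcs_def cycle_nodes_def D_def)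
    qed
  qed
  also have "S_nodes k p \<inter> cycle_nodes p = Inr ` {..<p}"
    by (auto simp: S_nodes_def clique_nodes_def cycle_nodes_def)
  also have "(\<Sum>j\<in>Inr ` {..<p}. a (D j)) = (\<Sum>j<p. a (cd p t j))"
    by (simp add: sum.reindex D_def)
  also have "\<dots> = (\<Sum>d<p. a d)" using cd_sum[OF assms] .
  finally show ?thesis .
qed


lemma G3:
  assumes "i0 < k" "t < k"
  shows "lin_cent a (S_nodes k k) (Sxy_arcs k k (Inl i0) (Inr t)) (Inl i0)
         = a 0 + real (k - 1) * a 1 + (\<Sum>d<k. a (Suc d))"
proof -
  define D :: "nat + nat \<Rightarrow> nat" where "D = case_sum (\<lambda>j. if j = i0 then 0 else 1) (\<lambda>j. Suc (cd k t j))"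
  have tt: "cd k t t = 0" by (simp add: cd_def)
  have "lin_cent a (S_nodes k k) (Sxy_arcs k k (Inl i0) (Inr t)) (Inl i0) = (\<Sum>j\<in>S_nodes k k \<inter> S_nodes k k. a (D j))"
  proof (rule lin_cent_D[OF fin_S])
    show "D (Inl i0) = 0" by (simp add: D_def)
    show "Inl i0 \<in> S_nodes k k" using assms by (simp add: S_nodes_def clique_nodes_def)
    show "u \<in> S_nodes k k \<and> D u \<le> Suc (D w)"
      if "(u,w) \<in> Sxy_arcs k k (Inl i0) (Inr t)" "w \<in> S_nodes k k" for u w
      using that assms cd_le[OF assms(2)] tt
      by (auto simp: Sxy_arcs_def S_arcs_def S_nodes_def clique_nodes_def cycle_nodes_def D_def)
    show "\<And>u. u \<in> S_nodes k k \<Longrightarrow> D u = 0 \<Longrightarrow> u = Inl i0"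
      by (auto simp: S_nodes_def clique_nodes_def cycle_nodes_def D_def split: if_splits)
    show "\<exists>w\<in>S_nodes k k. (u,w) \<in> Sxy_arcs k k (Inl i0) (Inr t) \<and> Suc (D w) = D u"
      if hu: "u \<in> S_nodes k k" "0 < D u" for u
    proof (cases u)
      case (Inl j)
      then have j: "j < k" "j \<noteq> i0" using hu by (auto simp: S_nodes_def clique_nodes_def cycle_nodes_def D_def)
      then show ?thesis using Inl assms
        by (intro bexI[of _ "Inl i0"]) (auto simp: Sxy_arcs_def S_arcs_def S_nodes_def clique_nodes_def D_def)
    next
      case (Inr j)
      then have j: "j < k" using hu by (auto simp: S_nodes_def clique_nodes_def cycle_nodes_def)
      show ?thesis
      proof (cases "j = t")
        case True
        then show ?thesis using Inr assms tt
          by (intro bexI[of _ "Inl i0"]) (auto simp: Sxy_arcs_def S_nodes_def clique_nodes_def D_def)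
      next
        case False
        then show ?thesis using Inr j assms cd_step[OF assms(2) j False]
          by (intro bexI[of _ "Inr ((j+1) mod k)"]) (auto simp: Sxy_arcs_def S_arcs_def S_nodes_def cycle_nodes_def D_def)
      qed
    qed
  qed
  also have "(\<Sum>j\<in>S_nodes k k \<inter> S_nodes k k. a (D j)) = (\<Sum>j<k. a (if j = i0 then 0 else 1)) + (\<Sum>j<k. a (Suc (cd k t j)))"
    by (simp add: sum_S_nodes D_def)
  also have "\<dots> = a 0 + real (k - 1) * a 1 + (\<Sum>d<k. a (Suc d))"
    using sum_one_out[OF assms(1)] cd_sum[OF assms(2), of "\<lambda>d. a (Suc d)"] by simp
  finally show ?thesis .
qed

lemma G4:
  assumes "i0 < k" "t < k"
  shows "lin_cent a (S_nodes k k) (Sxy_arcs k k (Inl i0) (Inr t)) (Inr t)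
         = a 1 + real (k - 1) * a 2 + (\<Sum>d<k. a d)"
proof -
  define D :: "nat + nat \<Rightarrow> nat" where "D = case_sum (\<lambda>j. if j = i0 then 1 else 2) (cd k t)"
  have tt: "cd k t t = 0" by (simp add: cd_def)
  have "lin_cent a (S_nodes k k) (Sxy_arcs k k (Inl i0) (Inr t)) (Inr t) = (\<Sum>j\<in>S_nodes k k \<inter> S_nodes k k. a (D j))"
  proof (rule lin_cent_D[OF fin_S])
    show "D (Inr t) = 0" by (simp add: D_def tt)
    show "Inr t \<in> S_nodes k k" using assms by (simp add: S_nodes_def cycle_nodes_def)
    show "u \<in> S_nodes k k \<and> D u \<le> Suc (D w)"
      if "(u,w) \<in> Sxy_arcs k k (Inl i0) (Inr t)" "w \<in> S_nodes k k" for u w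
      using that assms cd_le[OF assms(2)] tt
      by (auto simp: Sxy_arcs_def S_arcs_def S_nodes_def clique_nodes_def cycle_nodes_def D_def)
    show "\<And>u. u \<in> S_nodes k k \<Longrightarrow> D u = 0 \<Longrightarrow> u = Inr t"
      using cd_zero[OF assms(2)]
      by (auto simp: S_nodes_def clique_nodes_def cycle_nodes_def D_def split: if_splits)
    show "\<exists>w\<in>S_nodes k k. (u,w) \<in> Sxy_arcs k k (Inl i0) (Inr t) \<and> Suc (D w) = D u"
      if hu: "u \<in> S_nodes k k" "0 < D u" for u
    proof (cases u)
      case (Inl j)
      then have j: "j < k" using hu by (auto simp: S_nodes_def clique_nodes_def cycle_nodes_def D_def)
      show ?thesis
      proof (cases "j = i0")
        case True
        then show ?thesis using Inl assms tt
          by (intro bexI[of _ "Inr t"]) (auto simp: Sxy_arcs_def S_nodes_def cycle_nodes_def D_def)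
      next
        case False
        then show ?thesis using Inl j assms
          by (intro bexI[of _ "Inl i0"]) (auto simp: Sxy_arcs_def S_arcs_def S_nodes_def clique_nodes_def D_def)
      qed
    next
      case (Inr j)
      then have j: "j < k" using hu by (auto simp: S_nodes_def clique_nodes_def cycle_nodes_def)
      have "j \<noteq> t" using hu Inr tt by (auto simp: D_def)
      then show ?thesis using Inr j assms cd_step[OF assms(2) j]
        by (intro bexI[of _ "Inr ((j+1) mod k)"]) (auto simp: Sxy_arcs_def S_arcs_def S_nodes_def cycle_nodes_def D_def)
    qed
  qed
  also have "(\<Sum>j\<in>S_nodes k k \<inter> S_nodes k k. a (D j)) = (\<Sum>j<k. a (if j = i0 then 1 else 2)) + (\<Sum>j<k. a (cd k t j))"
    by (simp add: sum_S_nodes D_def)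
  also have "\<dots> = a 1 + real (k - 1) * a 2 + (\<Sum>d<k. a d)"
    using sum_one_out[OF assms(1)] cd_sum[OF assms(2), of a] by simp
  finally show ?thesis .
qed



lemma dens_ineq:
  fixes \<delta> :: real
  assumes "0 < \<delta>" "\<delta> < 1"
  shows "\<delta> + real (m + 2) * \<delta>^2 < real (m + 2) * \<delta> + \<delta> ^ (m + 3)"
proof (induction m)
  case 0
  have "0 < \<delta> * (1 - \<delta>)^2" using assms by simp
  then show ?case by (simp add: power2_eq_square power3_eq_cube algebra_simps)
next
  case (Suc m)
  have p1: "\<delta> ^ (m + 2) \<le> 1" using assms by (intro power_le_one) auto
  have "\<delta> ^ (m + 3) = \<delta> * \<delta> ^ (m + 2)" by (simp add: numeral_eq_Suc)
  also have "\<dots> \<le> \<delta>" using mult_left_le[OF p1, of \<delta>] assms by simp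
  finally have "\<delta> ^ (m + 3) \<le> \<delta>" .
  then have "0 \<le> (1 - \<delta>) * (\<delta> - \<delta> ^ (m + 3))" using assms by simp
  moreover have "\<delta> ^ (Suc m + 3) = \<delta> * \<delta> ^ (m + 3)"
    using power_Suc[of \<delta> "m+3"] by (simp only: add_Suc)
  ultimately show ?case using Suc.IH by (simp add: algebra_simps power2_eq_square)
qed

lemma shift_sum: "(\<Sum>d<k. (a::nat\<Rightarrow>real) (Suc d)) = (\<Sum>d<k. a d) + a k - a 0"
  using sum.lessThan_Suc_shift[of a k] by simp

theorem corollary2:
  fixes \<delta> :: real and a :: "nat \<Rightarrow> real"
  assumes "0 < \<delta>" and "\<delta> < 1"
    and "\<And>i. a i = (if i = 0 then 0 else \<delta> ^ i)"
  shows "density_axiom a \<and> \<not> size_axiom a"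
proof
  have a0: "a 0 = 0" and a1: "a 1 = \<delta>" and a2: "a 2 = \<delta>^2" and aS: "\<And>d. a (Suc d) = \<delta> ^ Suc d"
    using assms(3) by auto
  show "density_axiom a"
    unfolding density_axiom_def
  proof (intro allI impI ballI)
    fix k x y assume k: "3 \<le> k" and x: "x \<in> clique_nodes k" and y: "y \<in> cycle_nodes k"
    obtain i0 where i0: "x = Inl i0" "i0 < k" using x by (auto simp: clique_nodes_def)
    obtain t where t: "y = Inr t" "t < k" using y by (auto simp: cycle_nodes_def)
    obtain m where m: "k = m + 3" using k by (metis add.commute le_iff_add)
    have ak: "a k = \<delta> ^ k" using assms(3) k by simp
    have "\<delta> + real (k - 1) * \<delta>^2 < real (k - 1) * \<delta> + \<delta> ^ k"
      using dens_ineq[OF assms(1,2), of m] m by simp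
    then show "lin_cent a (S_nodes k k) (Sxy_arcs k k x y) x > lin_cent a (S_nodes k k) (Sxy_arcs k k x y) y"
      unfolding i0(1) t(1) G3[OF i0(2) t(2)] G4[OF i0(2) t(2)] shift_sum
      using a0 a1 a2 ak by simp
  qed
  show "\<not> size_axiom a"
  proof
    assume "size_axiom a"
    then have B: "\<forall>k \<ge> 1. \<exists>p0. \<forall>p \<ge> p0. p \<ge> 1 \<longrightarrow> (\<forall>x \<in> clique_nodes k. \<forall>y \<in> cycle_nodes p.
        lin_cent a (S_nodes k p) (S_arcs k p) x < lin_cent a (S_nodes k p) (S_arcs k p) y)"
      unfolding size_axiom_def by blast
    define k where "k = nat \<lceil>1 / (1 - \<delta>)\<rceil> + 1"
    have k1: "1 \<le> k" unfolding k_def by simp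
    have kge: "real (k - 1) \<ge> 1 / (1 - \<delta>)" unfolding k_def by linarith
    obtain p0 where p0: "\<forall>p \<ge> p0. p \<ge> 1 \<longrightarrow> (\<forall>x \<in> clique_nodes k. \<forall>y \<in> cycle_nodes p.
        lin_cent a (S_nodes k p) (S_arcs k p) x < lin_cent a (S_nodes k p) (S_arcs k p) y)"
      using B k1 by blast
    define p where "p = Suc p0"
    have "lin_cent a (S_nodes k p) (S_arcs k p) (Inl 0) < lin_cent a (S_nodes k p) (S_arcs k p) (Inr 0)"
      using p0 unfolding p_def by (auto simp: clique_nodes_def cycle_nodes_def k_def)
    then have lt: "real (k - 1) * \<delta> < (\<Sum>d<p. a d)"
      using G1[of 0 k a p] G2[of 0 p a k] a0 a1 unfolding k_def p_def by simp
    have "(\<Sum>d<p. a d) \<le> (\<Sum>d<Suc p. a d)" using assms by simp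
    also have "\<dots> = (\<Sum>d<p. \<delta> ^ Suc d)" unfolding sum.lessThan_Suc_shift a0 aS by simp
    also have "\<dots> = \<delta> * (\<Sum>d<p. \<delta> ^ d)" by (simp add: sum_distrib_left)
    also have "\<dots> = \<delta> * ((1 - \<delta> ^ p) / (1 - \<delta>))" using assms by (simp add: sum_gp_strict)
    also have "\<dots> \<le> \<delta> * (1 / (1 - \<delta>))"
      using assms by (intro mult_left_mono divide_right_mono) auto
    also have "\<dots> \<le> \<delta> * real (k - 1)" using mult_left_mono[OF kge, of \<delta>] assms by simp
    finally show False using lt by (simp add: mult.commute)
  qed
qed

end
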